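(* Let $a,b,c,d>0$ and let $G_B:\mathbb R^2\to\mathbb R^2$ be given by $G_B(0)=0$ and $G_B(u)=\frac{1}{|u|}\big((au_1^2+bu_2^2)u_1,\ (cu_1^2+du_2^2)u_2\big)$ for $u\neq0$. (i) If $\frac{\max\{a,d\}}{2}-2\sqrt{ad}\le b+c\le 2\sqrt{ad}$, then $G_B$ is monotone. If $\frac{\max\{a,d\}}{2}-2\sqrt{ad}< b+c< 2\sqrt{ad}$, then $G_B$ is $3$-monotone. (ii) Let $M=\max\{a,d\}$ and $m=\min\{a,d\}$. (a) If $M/m\le16$, then the non-strict condition in (i) is equivalent to $b+c\le2\sqrt{ad}$, and the strict condition in (i) is equivalent to $b+c<2\sqrt{ad}$. (b) If $M/m=64$, then the non-strict condition in (i) is equivalent to $b+c=2\sqrt{ad}$, while the strict condition in (i) cannot hold. (c) If $M/m>64$, then the non-strict condition in (i) cannot hold.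
   Context: A map $F:\mathbb R^n\to\mathbb R^n$ is monotone if $(F(u)-F(v))\cdot(u-v)\ge0$ for all $u,v$; for $\alpha>0$ it is $\alpha$-monotone if there is $C>0$ with $(F(u)-F(v))\cdot(u-v)\ge C|u-v|^\alpha$ for all $u,v\in\mathbb R^n$. $|\cdot|$ is the Euclidean norm. *)

theory Defs
  imports "HOL-Analysis.Analysis"
begin

definition monotone_map :: "(real^'n \<Rightarrow> real^'n) \<Rightarrow> bool" where
  "monotone_map F \<longleftrightarrow> (\<forall>u v. (F u - F v) \<bullet> (u - v) \<ge> 0)"

definition alpha_monotone :: "real \<Rightarrow> (real^'n \<Rightarrow> real^'n) \<Rightarrow> bool" where
  "alpha_monotone \<alpha> F \<longleftrightarrow>
     (\<exists>C>0. \<forall>u v. (F u - F v) \<bullet> (u - v) \<ge> C * norm (u - v) powr \<alpha>)"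

definition G_B :: "real \<Rightarrow> real \<Rightarrow> real \<Rightarrow> real \<Rightarrow> real^2 \<Rightarrow> real^2" where
  "G_B a b c d u = (if u = 0 then 0 else
     (1 / norm u) *\<^sub>R (\<chi> i. if i = 1 then (a * (u$1)^2 + b * (u$2)^2) * u$1
                              else (c * (u$1)^2 + d * (u$2)^2) * u$2))"

end

theory Submission
  imports Defs
begin


lemma param_coeffs:
  fixes a b c d g :: real
  assumes pos: "a > 0" "b > 0" "c > 0" "d > 0" and g: "g > 0" "g^2 = a*d"
  and lo: "max a d / 2 - 2*g \<le> b + c" and hi: "b + c \<le> 2*g"
  shows "(b + (c-a)/2)^2 \<le> 6*a*d + 3*a*c"
    and "(c + (b-d)/2)^2 \<le> 6*a*d + 3*b*d"
    and "2*(b + (c-a)/2)*(c + (b-d)/2) \<le> 13*a*d + b*c"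
proof -
  have loa: "a/2 - 2*g \<le> b + c" and lod: "d/2 - 2*g \<le> b+c" using lo by auto
  have ac: "a*c > 0" "b*d > 0" "a*d > 0" "b*c > 0" using pos by auto
  have g4: "(2*g)^2 = 4*(a*d)" using g by (simp add: power_mult_distrib)
  show "(b + (c-a)/2)^2 \<le> 6*a*d + 3*a*c"
  proof (cases "b + (c-a)/2 \<ge> 0")
    case True
    have "b + (c-a)/2 \<le> 2*g" using hi pos by (simp add: field_simps; linarith)
    then have "(b + (c-a)/2)^2 \<le> (2*g)^2" using True by (intro power_mono) auto
    then show ?thesis using g4 ac by simp
  next
    case False
    show ?thesis
    proof (cases "a \<ge> d")
      case True
      have "g^2 \<le> a^2" using g True pos by (simp add: power2_eq_square)
      then have ga: "g \<le> a" using pos power2_le_imp_le[of g] by auto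
      have "-(b + (c-a)/2) \<le> c/2 + 2*g" using loa by (simp add: field_simps; linarith)
      then have "(b + (c-a)/2)^2 \<le> (c/2+2*g)^2" using False by (smt (verit) power_mono power2_minus)
      moreover have c2: "c \<le> 2*g" using hi pos by linarith
      moreover have "c*c \<le> c*(2*g)" using c2 pos by (intro mult_left_mono) auto
      moreover have "c*g \<le> c*a" using ga pos by (intro mult_left_mono) auto
      moreover have "(c/2+2*g)^2 = c*c/4 + 2*(c*g) + 4*g^2" by (simp add: power2_eq_square field_simps)
      ultimately show ?thesis using g ac by (simp add: algebra_simps)
    next
      case False
      have "-(b + (c-a)/2) \<le> a/2" using pos by (simp add: field_simps; linarith)
      then have "(b + (c-a)/2)^2 \<le> (a/2)^2" using \<open>\<not> b + (c-a)/2 \<ge> 0\<close> by (smt (verit) power_mono power2_minus)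
      moreover have "a*a \<le> a*d" using False pos by (intro mult_left_mono) auto
      moreover have "(a/2)^2 = (a*a)/4" by (simp add: power2_eq_square)
      ultimately show ?thesis using ac by linarith
    qed
  qed
  show "(c + (b-d)/2)^2 \<le> 6*a*d + 3*b*d"
  proof (cases "c + (b-d)/2 \<ge> 0")
    case True
    have "c + (b-d)/2 \<le> 2*g" using hi pos by (simp add: field_simps; linarith)
    then have "(c + (b-d)/2)^2 \<le> (2*g)^2" using True by (intro power_mono) auto
    then show ?thesis using g4 ac by simp
  next
    case False
    show ?thesis
    proof (cases "d \<ge> a")
      case True
      have "g^2 \<le> d^2" using g True pos by (simp add: power2_eq_square)
      then have ga: "g \<le> d" using pos power2_le_imp_le[of g] by auto
      have "-(c + (b-d)/2) \<le> b/2 + 2*g" using lod by (simp add: field_simps; linarith)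
      then have "(c + (b-d)/2)^2 \<le> (b/2+2*g)^2" using False by (smt (verit) power_mono power2_minus)
      moreover have c2: "b \<le> 2*g" using hi pos by linarith
      moreover have "b*b \<le> b*(2*g)" using c2 pos by (intro mult_left_mono) auto
      moreover have "b*g \<le> b*d" using ga pos by (intro mult_left_mono) auto
      moreover have "(b/2+2*g)^2 = b*b/4 + 2*(b*g) + 4*g^2" by (simp add: power2_eq_square field_simps)
      ultimately show ?thesis using g ac by (simp add: algebra_simps)
    next
      case False
      have "-(c + (b-d)/2) \<le> d/2" using pos by (simp add: field_simps; linarith)
      then have "(c + (b-d)/2)^2 \<le> (d/2)^2" using \<open>\<not> c + (b-d)/2 \<ge> 0\<close> by (smt (verit) power_mono power2_minus)
      moreover have "d*d \<le> a*d" using False pos by (intro mult_right_mono) auto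
      moreover have "(d/2)^2 = (d*d)/4" by (simp add: power2_eq_square)
      ultimately show ?thesis using ac by linarith
    qed
  qed
  show "2*(b + (c-a)/2)*(c + (b-d)/2) \<le> 13*a*d + b*c"
  proof -
    define x where "x = b + (c-a)/2"
    define y where "y = c + (b-d)/2"
    have xu: "x \<le> b + c/2" "-x \<le> a/2" using pos unfolding x_def by (simp_all add: field_simps; linarith)+
    have yu: "y \<le> c + b/2" "-y \<le> d/2" using pos unfolding y_def by (simp_all add: field_simps; linarith)+
    have "x*y \<le> a*d/4 + 9/16*(b+c)^2"
    proof -
      consider "x \<ge> 0" "y \<ge> 0" | "x < 0" "y < 0" | "x * y \<le> 0"
        by (smt (verit) mult_nonneg_nonpos mult_nonpos_nonneg)
      then show ?thesis
      proof cases
        case 1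
        then have "x * y \<le> (b + c/2)*(c+b/2)" using xu yu by (intro mult_mono) auto
        moreover have "9/16*(b+c)^2 - (b + c/2)*(c+b/2) = (b-c)^2/16"
          by (simp add: power2_eq_square field_simps)
        ultimately show ?thesis using zero_le_power2[of "b-c"] ac by linarith
      next
        case 2
        then have "(-x) * (-y) \<le> (a/2)*(d/2)" using xu yu by (intro mult_mono) auto
        then show ?thesis using zero_le_power2[of "b+c"] by (simp; linarith)
      next
        case 3 then show ?thesis using ac zero_le_power2[of "b+c"] by linarith
      qed
    qed
    moreover have "(b+c)^2 \<le> (2*g)^2" using hi pos by (intro power_mono) auto
    ultimately have "2*(x*y) \<le> 13*a*d + b*c" using g4 ac by linarith
    then show ?thesis unfolding x_def y_def by (metis mult.assoc)
  qed
qed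



lemma psd2:
  fixes A B C k w1 w2 :: real
  assumes "A \<ge> k" "C \<ge> k" "(A-k)*(C-k) \<ge> B^2"
  shows "A*w1^2 + 2*B*w1*w2 + C*w2^2 \<ge> k*(w1^2+w2^2)"
proof -
  define A' where "A' = A - k"
  define C' where "C' = C - k"
  have A': "A' \<ge> 0" "C' \<ge> 0" "A'*C' \<ge> B^2" using assms by (auto simp: A'_def C'_def)
  have "A'*w1^2 + 2*B*w1*w2 + C'*w2^2 \<ge> 0"
  proof (cases "A' = 0")
    case True
    then have "B^2 \<le> 0" using A' by simp
    then have "B^2 = 0" using zero_le_power2[of B] by linarith
    then have "B = 0" by simp
    then show ?thesis using A' True by simp
  next
    case False
    then have Ap: "A' > 0" using A' by simp
    have "A'*(A'*w1^2 + 2*B*w1*w2 + C'*w2^2) = (A'*w1 + B*w2)^2 + (A'*C' - B^2)*w2^2"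
      by (simp add: power2_eq_square algebra_simps)
    also have "\<dots> \<ge> 0" using A' by (intro add_nonneg_nonneg mult_nonneg_nonneg) auto
    finally show ?thesis using Ap by (simp add: zero_le_mult_iff)
  qed
  then show ?thesis unfolding A'_def C'_def by (simp add: algebra_simps)
qed

lemma eight_pow4: "(p+q)^4 \<le> 8*(p^4+q^4::real)"
proof -
  have "8*(p^4+q^4) - (p+q)^4 = (p-q)^2*(7*p^2+10*p*q+7*q^2)"
    by algebra
  moreover have "7*p^2+10*p*q+7*q^2 = 2*p^2 + 2*q^2 + 5*(p+q)^2"
    by (simp add: power2_eq_square algebra_simps)
  moreover have "2*p^2 + 2*q^2 + 5*(p+q)^2 \<ge> 0" by simp
  ultimately show ?thesis by (metis diff_ge_0_iff_ge zero_le_mult_iff zero_le_power2)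
qed

lemma Q_bound:
  fixes a b c d x1 x2 w1 w2 :: real
  assumes pos: "a > 0" "b > 0" "c > 0" "d > 0"
  and c1: "(b + (c-a)/2)^2 \<le> 6*a*d + 3*a*c"
  and c3: "(c + (b-d)/2)^2 \<le> 6*a*d + 3*b*d"
  and c2: "2*(b + (c-a)/2)*(c + (b-d)/2) \<le> 13*a*d + b*c"
  and kap: "\<kappa> > 0" "\<kappa> \<le> min a b" "\<kappa> \<le> min c d"
     "\<kappa> * (2*a+b+c+2*d) \<le> min (a*c) (b*d) / 4"
  shows "(x1^2+x2^2)*(w1*(3*a*x1^2 + b*x2^2)*w1 + w1*(2*b*x1*x2)*w2 + w2*(2*c*x1*x2)*w1
            + w2*(c*x1^2 + 3*d*x2^2)*w2)
         - (w1*(a*x1^2 + b*x2^2)*x1 + w2*(c*x1^2 + d*x2^2)*x2)*(x1*w1 + x2*w2)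
         \<ge> \<kappa> * (x1^2+x2^2)^2 * (w1^2+w2^2)"
proof -
  define p where "p = x1^2"
  define q where "q = x2^2"
  define \<alpha> where "\<alpha> = b + (c-a)/2"
  define \<beta> where "\<beta> = c + (b-d)/2"
  have pq: "p \<ge> 0" "q \<ge> 0" "p*q \<ge> 0" by (auto simp: p_def q_def)
  define S11 where "S11 = 2*a*p^2 + 3*a*p*q + b*q^2"
  define S22 where "S22 = c*p^2 + 3*d*p*q + 2*d*q^2"
  define S12 where "S12 = x1*x2*(\<alpha>*p + \<beta>*q)"
  define k where "k = \<kappa>*(p+q)^2"
  have Qeq: "(x1^2+x2^2)*(w1*(3*a*x1^2 + b*x2^2)*w1 + w1*(2*b*x1*x2)*w2 + w2*(2*c*x1*x2)*w1
            + w2*(c*x1^2 + 3*d*x2^2)*w2)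
         - (w1*(a*x1^2 + b*x2^2)*x1 + w2*(c*x1^2 + d*x2^2)*x2)*(x1*w1 + x2*w2)
         = S11*w1^2 + 2*S12*w1*w2 + S22*w2^2"
    unfolding S11_def S22_def S12_def p_def q_def \<alpha>_def \<beta>_def
    by (simp add: field_simps) algebra
  have S12sq: "S12^2 = p*q*(\<alpha>*p+\<beta>*q)^2"
    unfolding S12_def p_def q_def by algebra
  have Deq: "S11*S22 - S12^2 = 2*a*c*p^4 + (6*a*d+3*a*c-\<alpha>^2)*p^3*q
      + (13*a*d+b*c-2*\<alpha>*\<beta>)*p^2*q^2 + (6*a*d+3*b*d-\<beta>^2)*p*q^3 + 2*b*d*q^4"
    unfolding S12sq S11_def S22_def by algebra
  have co: "6*a*d+3*a*c-\<alpha>^2 \<ge> 0" "13*a*d+b*c-2*\<alpha>*\<beta> \<ge> 0" "6*a*d+3*b*d-\<beta>^2 \<ge> 0"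
    using c1 c2 c3 by (auto simp: \<alpha>_def \<beta>_def)
  have Dge: "S11*S22 - S12^2 \<ge> 2*a*c*p^4 + 2*b*d*q^4"
  proof -
    have "(6*a*d+3*a*c-\<alpha>^2)*p^3*q \<ge> 0" "(13*a*d+b*c-2*\<alpha>*\<beta>)*p^2*q^2 \<ge> 0"
      "(6*a*d+3*b*d-\<beta>^2)*p*q^3 \<ge> 0" using co pq by auto
    then show ?thesis unfolding Deq by linarith
  qed
  define m where "m = min (a*c) (b*d)"
  have "2*a*c*p^4 + 2*b*d*q^4 \<ge> 2*m*(p^4+q^4)"
  proof -
    have "a*c*p^4 \<ge> m*p^4" "b*d*q^4 \<ge> m*q^4" unfolding m_def by (auto intro!: mult_right_mono)
    then show ?thesis by (simp add: algebra_simps)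
  qed
  moreover have "2*m*(p^4+q^4) \<ge> m/4*(p+q)^4"
  proof -
    have "m \<ge> 0" using pos unfolding m_def by simp
    then have "m*(p+q)^4 \<le> m*(8*(p^4+q^4))" using eight_pow4[of p q] by (simp add: mult_left_mono)
    then show ?thesis by (simp add: algebra_simps)
  qed
  ultimately have Dge2: "S11*S22 - S12^2 \<ge> m/4*(p+q)^4" using Dge by linarith
  define K where "K = 2*a+b+c+2*d"
  have Ssum: "S11 + S22 \<le> K*(p+q)^2"
  proof -
    have "K*(p+q)^2 - (S11+S22) = (b+2*d)*p^2 + (a+2*b+2*c+d)*(p*q) + (2*a+c)*q^2"
      unfolding K_def S11_def S22_def by algebra
    moreover have "(b+2*d)*p^2 + (a+2*b+2*c+d)*(p*q) + (2*a+c)*q^2 \<ge> 0"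
      using pos pq by (intro add_nonneg_nonneg mult_nonneg_nonneg) auto
    ultimately show ?thesis by linarith
  qed
  have S11k: "S11 \<ge> k"
  proof -
    have "S11 - k = (2*a-\<kappa>)*p^2 + (3*a-2*\<kappa>)*(p*q) + (b-\<kappa>)*q^2"
      unfolding S11_def k_def by algebra
    moreover have "(2*a-\<kappa>)*p^2 + (3*a-2*\<kappa>)*(p*q) + (b-\<kappa>)*q^2 \<ge> 0"
      using kap pos pq by (intro add_nonneg_nonneg mult_nonneg_nonneg) auto
    ultimately show ?thesis by linarith
  qed
  have S22k: "S22 \<ge> k"
  proof -
    have "S22 - k = (c-\<kappa>)*p^2 + (3*d-2*\<kappa>)*(p*q) + (2*d-\<kappa>)*q^2"
      unfolding S22_def k_def by algebra
    moreover have "(c-\<kappa>)*p^2 + (3*d-2*\<kappa>)*(p*q) + (2*d-\<kappa>)*q^2 \<ge> 0"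
      using kap pos pq by (intro add_nonneg_nonneg mult_nonneg_nonneg) auto
    ultimately show ?thesis by linarith
  qed
  have "k*(S11+S22) \<le> \<kappa>*(p+q)^2*(K*(p+q)^2)"
    unfolding k_def using Ssum kap by (intro mult_left_mono) auto
  also have "\<dots> = (\<kappa>*K)*(p+q)^4" by (simp add: power2_eq_square power4_eq_xxxx)
  also have "\<dots> \<le> m/4*(p+q)^4"
    using kap unfolding K_def m_def by (intro mult_right_mono) auto
  finally have kS: "k*(S11+S22) \<le> m/4*(p+q)^4" .
  have "(S11-k)*(S22-k) = (S11*S22 - S12^2) - k*(S11+S22) + k^2 + S12^2"
    by algebra
  then have det: "(S11-k)*(S22-k) \<ge> S12^2" using Dge2 kS zero_le_power2[of k] by linarith
  have "S11*w1^2 + 2*S12*w1*w2 + S22*w2^2 \<ge> k*(w1^2+w2^2)"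
    by (rule psd2[OF S11k S22k det])
  then show ?thesis unfolding Qeq k_def p_def q_def by simp
qed



lemma dabs: "((\<lambda>y. y*\<bar>y\<bar>) has_real_derivative 2*\<bar>y\<bar>) (at (y::real))"
proof (cases "y = 0")
  case True
  have "((\<lambda>z. (z*\<bar>z\<bar> - y*\<bar>y\<bar>)/(z - y)) \<longlongrightarrow> 2*\<bar>y\<bar>) (at y)"
  proof -
    have "((\<lambda>z::real. \<bar>z\<bar>) \<longlongrightarrow> 0) (at 0)"
      using tendsto_rabs[OF tendsto_ident_at[of "0::real" UNIV]] by simp
    moreover have "\<forall>\<^sub>F z in at (0::real). \<bar>z\<bar> = (z*\<bar>z\<bar> - 0*\<bar>0\<bar>)/(z - 0)"
      unfolding eventually_at_filter by (rule always_eventually) simp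
    ultimately show ?thesis using True by (simp add: tendsto_cong)
  qed
  then show ?thesis by (simp add: has_field_derivative_iff)
next
  case False
  show ?thesis
  proof (cases "y > 0")
    case True
    have "((\<lambda>y. y*y) has_real_derivative 2*\<bar>y\<bar>) (at y)"
      using True by (auto intro!: derivative_eq_intros)
    then show ?thesis
      by (rule has_field_derivative_transform_within_open[where S="{0<..}"]) (use True in auto)
  next
    case F: False
    have "((\<lambda>y. -(y*y)) has_real_derivative 2*\<bar>y\<bar>) (at y)"
      using F False by (auto intro!: derivative_eq_intros)
    then show ?thesis
      by (rule has_field_derivative_transform_within_open[where S="{..<0}"]) (use F False in auto)
  qed
qed

lemma incr_except:
  fixes f :: "real \<Rightarrow> real"
  assumes cont: "continuous_on {0..1} f"
  and der: "\<And>t. 0 < t \<Longrightarrow> t < 1 \<Longrightarrow> t \<noteq> t0 \<Longrightarrow> \<exists>y. DERIV f t :> y \<and> y \<ge> 0"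
  shows "f 0 \<le> f 1"
proof (cases "0 < t0 \<and> t0 < 1")
  case True
  have "f 0 \<le> f t0"
    by (rule DERIV_nonneg_imp_increasing_open) (use True der in \<open>auto intro: continuous_on_subset[OF cont]\<close>)
  moreover have "f t0 \<le> f 1"
    by (rule DERIV_nonneg_imp_increasing_open) (use True der in \<open>auto intro: continuous_on_subset[OF cont]\<close>)
  ultimately show ?thesis by linarith
next
  case False
  show ?thesis
    by (rule DERIV_nonneg_imp_increasing_open) (use False der cont in auto)
qed

lemma h_gap:
  fixes s L :: real assumes "L > 0"
  shows "(s+L)*\<bar>s+L\<bar> - s*\<bar>s\<bar> \<ge> L^2/2"
proof -
  consider "s \<ge> 0" | "s \<le> -L" | "-L < s" "s < 0" by linarith
  then show ?thesis
  proof cases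
    case 1 then show ?thesis using assms by (simp add: power2_eq_square algebra_simps abs_of_nonneg)
  next
    case 2
    have "s * L \<le> (-L) * L" using 2 assms by (intro mult_right_mono) auto
    moreover have "(s+L)*abs(s+L) - s*abs(s) = s^2 - (s+L)^2" using 2 assms
      by (simp add: abs_of_nonpos power2_eq_square algebra_simps)
    moreover have "s^2 - (s+L)^2 = -2*(s*L) - L*L" by algebra
    moreover have "L^2 = L*L" by algebra
    moreover have "(-L)*L = -(L*L)" by simp
    moreover have "L*L > 0" using assms by simp
    ultimately show ?thesis by linarith
  next
    case 3
    then have "(s+L)*\<bar>s+L\<bar> - s*\<bar>s\<bar> = (s+L)^2 + s^2" by (simp add: power2_eq_square abs_of_pos abs_of_neg)
    moreover have "(s+L)^2 + s^2 - L^2/2 = (2 * s + L)^2/2" by (simp add: power2_eq_square algebra_simps)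
    ultimately show ?thesis using zero_le_power2[of "2 * s + L"] by linarith
  qed
qed



definition gf1 :: "real \<Rightarrow> real \<Rightarrow> real \<Rightarrow> real \<Rightarrow> real" where
  "gf1 a b x1 x2 = (if x1 = 0 \<and> x2 = 0 then 0 else (a*x1^2 + b*x2^2)*x1 / sqrt (x1^2+x2^2))"
definition gf2 :: "real \<Rightarrow> real \<Rightarrow> real \<Rightarrow> real \<Rightarrow> real" where
  "gf2 c d x1 x2 = (if x1 = 0 \<and> x2 = 0 then 0 else (c*x1^2 + d*x2^2)*x2 / sqrt (x1^2+x2^2))"

lemma frac_bound:
  fixes a b x x1 x2 :: real
  assumes "a \<ge> 0" "b \<ge> 0" "\<bar>x\<bar> \<le> sqrt (x1^2+x2^2)"
  shows "\<bar>(a*x1^2+b*x2^2)*x / sqrt (x1^2+x2^2)\<bar> \<le> (a+b)*(x1^2+x2^2)"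
proof (cases "sqrt (x1^2+x2^2) = 0")
  case True then show ?thesis using assms by simp
next
  case False
  have "sqrt (x1^2+x2^2) \<ge> 0" by simp
  then have N: "sqrt (x1^2+x2^2) > 0" using False by linarith
  have A: "a*x1^2+b*x2^2 \<ge> 0" using assms by simp
  have "\<bar>(a*x1^2+b*x2^2)*x / sqrt (x1^2+x2^2)\<bar> = (a*x1^2+b*x2^2)*(\<bar>x\<bar> / sqrt (x1^2+x2^2))"
    using A N by (simp add: abs_mult)
  also have "\<dots> \<le> (a*x1^2+b*x2^2)*1"
    using A N assms(3) by (intro mult_left_mono) auto
  also have "\<dots> \<le> (a+b)*(x1^2+x2^2)"
  proof -
    have "a*x1^2 \<le> a*(x1^2+x2^2)" "b*x2^2 \<le> b*(x1^2+x2^2)" using assms by (auto intro!: mult_left_mono)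
    then show ?thesis by (simp add: algebra_simps)
  qed
  finally show ?thesis .
qed

lemma abs_le_N1: "\<bar>x1\<bar> \<le> sqrt (x1^2+x2^2::real)"
  by (metis real_sqrt_abs real_sqrt_le_mono le_add_same_cancel1 zero_le_power2)
lemma abs_le_N2: "\<bar>x2\<bar> \<le> sqrt (x1^2+x2^2::real)"
  by (metis real_sqrt_abs real_sqrt_le_mono le_add_same_cancel2 zero_le_power2)

lemma gf_bound:
  assumes "a \<ge> 0" "b \<ge> 0" "c \<ge> 0" "d \<ge> 0"
  shows "\<bar>gf1 a b x1 x2\<bar> \<le> (a+b)*(x1^2+x2^2)" "\<bar>gf2 c d x1 x2\<bar> \<le> (c+d)*(x1^2+x2^2)"
  using frac_bound[OF assms(1,2) abs_le_N1[of x1 x2]] frac_bound[OF assms(3,4) abs_le_N2[of x2 x1]]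
  unfolding gf1_def gf2_def by (auto simp: add_nonneg_nonneg)



lemma dP: "((\<lambda>s. w1*((a*(v1+s*w1)^2 + b*(v2+s*w2)^2)*(v1+s*w1)) + w2*((c*(v1+s*w1)^2 + d*(v2+s*w2)^2)*(v2+s*w2)))
  has_real_derivative
  (let x1 = v1+t*w1; x2 = v2+t*w2 in w1*(3*a*x1^2 + b*x2^2)*w1 + w1*(2*b*x1*x2)*w2 + w2*(2*c*x1*x2)*w1
            + w2*(c*x1^2 + 3*d*x2^2)*w2)) (at t)"
  unfolding Let_def
  apply (rule derivative_eq_intros refl)+
  apply (simp add: field_simps)
  apply algebra
  done

lemma dN: "0 < (v1+t*w1)^2 + (v2+t*w2)^2 \<Longrightarrow> ((\<lambda>s. sqrt ((v1+s*w1)^2 + (v2+s*w2)^2))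
  has_real_derivative inverse (sqrt ((v1+t*w1)^2 + (v2+t*w2)^2)) / 2 * (2*(v1+t*w1)*w1 + 2*(v2+t*w2)*w2)) (at t)"
proof -
  assume pos: "0 < (v1+t*w1)^2 + (v2+t*w2)^2"
  have "((\<lambda>s. (v1+s*w1)^2 + (v2+s*w2)^2) has_real_derivative (2*(v1+t*w1)*w1 + 2*(v2+t*w2)*w2)) (at t)"
    apply (rule derivative_eq_intros refl)+
    apply (simp add: field_simps)
    done
  from DERIV_chain2[OF DERIV_real_sqrt[OF pos] this] show ?thesis .
qed

lemma alg:
  fixes N xa xb wa wb :: real
  assumes "N > 0" "N^2 = xa^2+xb^2"
  shows "((wa*(3*a*xa^2 + b*xb^2)*wa + wa*(2*b*xa*xb)*wb + wb*(2*c*xa*xb)*wa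
            + wb*(c*xa^2 + 3*d*xb^2)*wb) * N -
          (wa*((a*xa^2 + b*xb^2)*xa) + wb*((c*xa^2 + d*xb^2)*xb)) * (inverse N / 2 * (2*xa*wa + 2*xb*wb))) / (N*N)
   = ((xa^2+xb^2)*(wa*(3*a*xa^2 + b*xb^2)*wa + wa*(2*b*xa*xb)*wb + wb*(2*c*xa*xb)*wa
            + wb*(c*xa^2 + 3*d*xb^2)*wb)
         - (wa*(a*xa^2 + b*xb^2)*xa + wb*(c*xa^2 + d*xb^2)*xb)*(xa*wa + xb*wb)) / N^3"
  using assms
  apply (simp add: field_simps)
  apply algebra
  done



lemma scalar_main:
  fixes a b c d \<kappa> v1 v2 w1 w2 :: real
  assumes pos: "a > 0" "b > 0" "c > 0" "d > 0" and kap: "\<kappa> > 0"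
  and Qb: "\<And>x1 x2. (x1^2+x2^2)*(w1*(3*a*x1^2 + b*x2^2)*w1 + w1*(2*b*x1*x2)*w2 + w2*(2*c*x1*x2)*w1
            + w2*(c*x1^2 + 3*d*x2^2)*w2)
         - (w1*(a*x1^2 + b*x2^2)*x1 + w2*(c*x1^2 + d*x2^2)*x2)*(x1*w1 + x2*w2)
         \<ge> \<kappa> * (x1^2+x2^2)^2 * (w1^2+w2^2)"
  shows "(gf1 a b (v1+w1) (v2+w2) - gf1 a b v1 v2)*w1 + (gf2 c d (v1+w1) (v2+w2) - gf2 c d v1 v2)*w2
         \<ge> \<kappa>/4 * sqrt(w1^2+w2^2)^3"
proof (cases "w1 = 0 \<and> w2 = 0")
  case True then show ?thesis by simp
next
  case wnz: False
  define L2 where "L2 = w1^2+w2^2"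
  define L where "L = sqrt L2"
  have L2p: "L2 > 0" using wnz unfolding L2_def by (auto simp: add_pos_nonneg add_nonneg_pos)
  have Lp: "L > 0" using L2p unfolding L_def by simp
  have LL: "L*L = L2" using L2p unfolding L_def by simp
  define X1 where "X1 t = v1 + t*w1" for t
  define X2 where "X2 t = v2 + t*w2" for t
  define \<phi> where "\<phi> t = w1 * gf1 a b (X1 t) (X2 t) + w2 * gf2 c d (X1 t) (X2 t)" for t
  define \<sigma> where "\<sigma> = v1*w1 + v2*w2"
  define h where "h t = (\<sigma> + t*L2) * \<bar>\<sigma> + t*L2\<bar> / (2*L2)" for t
  define \<psi> where "\<psi> t = \<phi> t - \<kappa>*L*h t" for t
  define P where "P s = w1*((a*(v1+s*w1)^2 + b*(v2+s*w2)^2)*(v1+s*w1)) + w2*((c*(v1+s*w1)^2 + d*(v2+s*w2)^2)*(v2+s*w2))" for s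
  define N where "N s = sqrt ((v1+s*w1)^2 + (v2+s*w2)^2)" for s
  have Xw: "X1 t * w1 + X2 t * w2 = \<sigma> + t*L2" for t
    unfolding X1_def X2_def \<sigma>_def L2_def by algebra
  have dphi: "\<exists>D. (\<phi> has_real_derivative D) (at t) \<and> D \<ge> \<kappa> * N t * L2"
    if nz: "0 < X1 t ^2 + X2 t ^2" for t
  proof -
    let ?S = "{s. 0 < (v1+s*w1)^2 + (v2+s*w2)^2}"
    have opS: "open ?S"
      by (rule open_Collect_less) (auto intro!: continuous_intros)
    have eqS: "P s / N s = \<phi> s" if "s \<in> ?S" for s
    proof -
      have "\<not> (X1 s = 0 \<and> X2 s = 0)" using that unfolding X1_def X2_def by auto
      then show ?thesis unfolding \<phi>_def gf1_def gf2_def P_def N_def X1_def X2_def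
        by (simp add: add_divide_distrib)
    qed
    have nz': "0 < (v1+t*w1)^2 + (v2+t*w2)^2" using nz unfolding X1_def X2_def .
    have Np: "N t > 0" using nz' unfolding N_def by simp
    have N2: "(N t)^2 = X1 t^2 + X2 t^2" using nz' unfolding N_def X1_def X2_def by simp
    have dPN: "((\<lambda>s. P s / N s) has_real_derivative
       ((let x1 = v1+t*w1; x2 = v2+t*w2 in w1*(3*a*x1^2 + b*x2^2)*w1 + w1*(2*b*x1*x2)*w2 + w2*(2*c*x1*x2)*w1
            + w2*(c*x1^2 + 3*d*x2^2)*w2) * N t - P t * (inverse (N t) / 2 * (2*(v1+t*w1)*w1 + 2*(v2+t*w2)*w2)))
        / (N t * N t)) (at t)"
      unfolding P_def N_def
      by (rule DERIV_divide[OF dP dN[OF nz']]) (use nz' in auto)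
    have dphi': "(\<phi> has_real_derivative
       ((let x1 = v1+t*w1; x2 = v2+t*w2 in w1*(3*a*x1^2 + b*x2^2)*w1 + w1*(2*b*x1*x2)*w2 + w2*(2*c*x1*x2)*w1
            + w2*(c*x1^2 + 3*d*x2^2)*w2) * N t - P t * (inverse (N t) / 2 * (2*(v1+t*w1)*w1 + 2*(v2+t*w2)*w2)))
        / (N t * N t)) (at t)"
      by (rule has_field_derivative_transform_within_open[OF dPN opS]) (use nz' eqS in auto)
    let ?x1 = "X1 t" and ?x2 = "X2 t"
    have Deq: "((let x1 = v1+t*w1; x2 = v2+t*w2 in w1*(3*a*x1^2 + b*x2^2)*w1 + w1*(2*b*x1*x2)*w2 + w2*(2*c*x1*x2)*w1
            + w2*(c*x1^2 + 3*d*x2^2)*w2) * N t - P t * (inverse (N t) / 2 * (2*(v1+t*w1)*w1 + 2*(v2+t*w2)*w2)))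
        / (N t * N t) =
        ((?x1^2+?x2^2)*(w1*(3*a*?x1^2 + b*?x2^2)*w1 + w1*(2*b*?x1*?x2)*w2 + w2*(2*c*?x1*?x2)*w1
            + w2*(c*?x1^2 + 3*d*?x2^2)*w2)
         - (w1*(a*?x1^2 + b*?x2^2)*?x1 + w2*(c*?x1^2 + d*?x2^2)*?x2)*(?x1*w1 + ?x2*w2)) / N t ^3"
      using alg[where a=a and b=b and c=c and d=d and wa=w1 and wb=w2, OF Np N2] unfolding Let_def P_def X1_def X2_def by simp
    have "\<kappa> * (?x1^2+?x2^2)^2 * L2 / N t ^3 \<le>
        ((?x1^2+?x2^2)*(w1*(3*a*?x1^2 + b*?x2^2)*w1 + w1*(2*b*?x1*?x2)*w2 + w2*(2*c*?x1*?x2)*w1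
            + w2*(c*?x1^2 + 3*d*?x2^2)*w2)
         - (w1*(a*?x1^2 + b*?x2^2)*?x1 + w2*(c*?x1^2 + d*?x2^2)*?x2)*(?x1*w1 + ?x2*w2)) / N t ^3"
      using Qb[of ?x1 ?x2] Np unfolding L2_def by (intro divide_right_mono) auto
    moreover have "\<kappa> * (?x1^2+?x2^2)^2 * L2 / N t ^3 = \<kappa> * N t * L2"
      using Np unfolding N2[symmetric] by (simp add: power2_eq_square power3_eq_cube field_simps)
    ultimately show ?thesis using dphi' Deq by auto
  qed
  define t0 where "t0 = (SOME t. X1 t = 0 \<and> X2 t = 0)"
  have uniq: "t = t0" if "X1 t = 0 \<and> X2 t = 0" for t
  proof -
    have "X1 t0 = 0 \<and> X2 t0 = 0" unfolding t0_def using someI[of "\<lambda>t. X1 t = 0 \<and> X2 t = 0", OF that] .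
    moreover have "(t - t0)*w1 = X1 t - X1 t0" "(t - t0)*w2 = X2 t - X2 t0" unfolding X1_def X2_def by algebra+
    ultimately have "(t - t0)*w1 = 0" "(t - t0)*w2 = 0" using that by auto
    then show ?thesis using wnz by auto
  qed
  have CS: "\<bar>\<sigma> + t*L2\<bar> \<le> N t * L" for t
  proof -
    have "(X1 t * w1 + X2 t * w2)^2 \<le> (X1 t^2 + X2 t^2)*(w1^2+w2^2)"
    proof -
      have "(X1 t^2 + X2 t^2)*(w1^2+w2^2) - (X1 t * w1 + X2 t * w2)^2 = (X1 t * w2 - X2 t * w1)^2"
        by algebra
      then show ?thesis using zero_le_power2[of "X1 t * w2 - X2 t * w1"] by linarith
    qed
    then have "sqrt ((\<sigma> + t*L2)^2) \<le> sqrt ((X1 t^2 + X2 t^2)*L2)" unfolding Xw L2_def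
      by (rule real_sqrt_le_mono)
    then show ?thesis unfolding N_def L_def X1_def X2_def by (simp add: real_sqrt_mult)
  qed
  have dh: "(h has_real_derivative \<bar>\<sigma> + t*L2\<bar>) (at t)" for t
  proof -
    have "((\<lambda>t. \<sigma> + t*L2) has_real_derivative L2) (at t)"
      by (auto intro!: derivative_eq_intros)
    from DERIV_chain2[OF dabs this]
    have "((\<lambda>t. (\<sigma> + t*L2) * \<bar>\<sigma> + t*L2\<bar>) has_real_derivative 2*\<bar>\<sigma> + t*L2\<bar> * L2) (at t)" .
    from DERIV_cdivide[OF this, of "2*L2"]
    have "(h has_real_derivative 2*\<bar>\<sigma> + t*L2\<bar> * L2 / (2*L2)) (at t)" unfolding h_def[abs_def] .
    moreover have "2*\<bar>\<sigma> + t*L2\<bar> * L2 / (2*L2) = \<bar>\<sigma> + t*L2\<bar>" using L2p by simp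
    ultimately show ?thesis by simp
  qed
  have dpsi: "\<exists>y. DERIV \<psi> t :> y \<and> y \<ge> 0" if "0 < t" "t < 1" "t \<noteq> t0" for t
  proof -
    have "\<not> (X1 t = 0 \<and> X2 t = 0)" using uniq that(3) by blast
    then have nz: "0 < X1 t ^2 + X2 t ^2" by (auto simp: add_pos_nonneg add_nonneg_pos)
    obtain D where D: "(\<phi> has_real_derivative D) (at t)" "D \<ge> \<kappa> * N t * L2" using dphi[OF nz] by blast
    have "(\<psi> has_real_derivative D - \<kappa>*L*\<bar>\<sigma> + t*L2\<bar>) (at t)"
      unfolding \<psi>_def[abs_def] by (intro DERIV_diff D(1) DERIV_cmult dh)
    moreover have "\<kappa>*L*\<bar>\<sigma> + t*L2\<bar> \<le> \<kappa>*L*(N t * L)"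
      using CS[of t] kap Lp by (intro mult_left_mono) auto
    moreover have "\<kappa>*L*(N t * L) = \<kappa> * N t * L2" using LL by (simp add: algebra_simps)
    ultimately show ?thesis using D(2) by (intro exI[of _ "D - \<kappa>*L*\<bar>\<sigma> + t*L2\<bar>"]) auto
  qed
  have cphi: "isCont \<phi> t" for t
  proof (cases "X1 t = 0 \<and> X2 t = 0")
    case False
    then have nz: "0 < X1 t ^2 + X2 t ^2" by (auto simp: add_pos_nonneg add_nonneg_pos)
    then show ?thesis using dphi[OF nz] DERIV_isCont by blast
  next
    case True
    define g where "g s = (\<bar>w1\<bar>*(a+b) + \<bar>w2\<bar>*(c+d))*(X1 s^2 + X2 s^2)" for s
    have "isCont g t" unfolding g_def[abs_def] X1_def X2_def by (intro continuous_intros)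
    moreover have "g t = 0" using True unfolding g_def by simp
    ultimately have g0: "(g \<longlongrightarrow> 0) (at t)" by (metis isCont_def)
    have bnd: "norm (\<phi> s) \<le> g s" for s
    proof -
      have "norm (\<phi> s) \<le> \<bar>w1\<bar> * \<bar>gf1 a b (X1 s) (X2 s)\<bar> + \<bar>w2\<bar> * \<bar>gf2 c d (X1 s) (X2 s)\<bar>"
        unfolding \<phi>_def by (simp add: abs_mult[symmetric] abs_triangle_ineq)
      also have "\<dots> \<le> \<bar>w1\<bar> * ((a+b)*(X1 s^2 + X2 s^2)) + \<bar>w2\<bar> * ((c+d)*(X1 s^2 + X2 s^2))"
        using gf_bound[of a b c d "X1 s" "X2 s"] pos by (intro add_mono mult_left_mono) auto
      also have "\<dots> = g s" unfolding g_def by (simp add: algebra_simps)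
      finally show ?thesis .
    qed
    have "(\<phi> \<longlongrightarrow> 0) (at t)" by (rule Lim_null_comparison[OF always_eventually g0]) (use bnd in auto)
    moreover have "\<phi> t = 0" using True unfolding \<phi>_def gf1_def gf2_def by simp
    ultimately show ?thesis by (simp add: isCont_def)
  qed
  have cpsi: "continuous_on {0..1} \<psi>"
  proof (intro continuous_at_imp_continuous_on ballI)
    fix t :: real
    have "isCont h t" unfolding h_def[abs_def] using L2p by (intro continuous_intros) auto
    then show "isCont \<psi> t" unfolding \<psi>_def[abs_def] using cphi[of t] by (intro continuous_intros)
  qed
  have "\<psi> 0 \<le> \<psi> 1" by (rule incr_except[OF cpsi dpsi])
  then have "\<kappa>*L*(h 1 - h 0) \<le> \<phi> 1 - \<phi> 0" unfolding \<psi>_def by (simp add: algebra_simps)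
  moreover have "h 1 - h 0 \<ge> L2/4"
  proof -
    have "h 1 - h 0 = ((\<sigma>+L2)*\<bar>\<sigma>+L2\<bar> - \<sigma>*\<bar>\<sigma>\<bar>)/(2*L2)" unfolding h_def by (simp add: diff_divide_distrib)
    also have "\<dots> \<ge> (L2^2/2)/(2*L2)" using h_gap[OF L2p, of \<sigma>] L2p by (intro divide_right_mono) auto
    finally show ?thesis using L2p by (simp add: power2_eq_square)
  qed
  ultimately have "\<kappa>*L*(L2/4) \<le> \<phi> 1 - \<phi> 0"
    using kap Lp by (smt (verit) mult_left_mono mult_pos_pos)
  moreover have "\<phi> 1 - \<phi> 0 = (gf1 a b (v1+w1) (v2+w2) - gf1 a b v1 v2)*w1 + (gf2 c d (v1+w1) (v2+w2) - gf2 c d v1 v2)*w2"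
    unfolding \<phi>_def X1_def X2_def by (simp add: algebra_simps)
  moreover have "\<kappa>/4 * sqrt(w1^2+w2^2)^3 = \<kappa>*L*(L2/4)"
    unfolding L_def[symmetric] L2_def[symmetric] using LL by (simp add: power3_eq_cube)
  ultimately show ?thesis by linarith
qed



lemma GB_comp:
  "G_B a b c d u $ 1 = gf1 a b (u$1) (u$2)" "G_B a b c d u $ 2 = gf2 c d (u$1) (u$2)"
proof -
  have z: "(u = 0) = (u$1 = 0 \<and> u$2 = 0)" by (simp add: vec_eq_iff forall_2)
  have n: "norm u = sqrt ((u$1)^2 + (u$2)^2)" by (simp add: norm_vec_def L2_set_def sum_2)
  have ne: "(2::2) \<noteq> 1" by simp
  have e1: "G_B a b c d u $ 1 = (if u = 0 then 0 else (1 / norm u) * ((a * (u$1)^2 + b * (u$2)^2) * u$1))"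
    unfolding G_B_def by simp
  have e2: "G_B a b c d u $ 2 = (if u = 0 then 0 else (1 / norm u) * ((c * (u$1)^2 + d * (u$2)^2) * u$2))"
    unfolding G_B_def using ne by simp
  show "G_B a b c d u $ 1 = gf1 a b (u$1) (u$2)" unfolding e1 gf1_def z n by simp
  show "G_B a b c d u $ 2 = gf2 c d (u$1) (u$2)" unfolding e2 gf2_def z n by simp
qed
lemma GB_main:
  fixes a b c d :: real
  assumes pos: "a > 0" "b > 0" "c > 0" "d > 0"
  and cond: "max a d / 2 - 2 * sqrt (a * d) \<le> b + c" "b + c \<le> 2 * sqrt (a * d)"
  shows "\<exists>C>0. \<forall>u v. (G_B a b c d u - G_B a b c d v) \<bullet> (u - v) \<ge> C * norm (u - v) ^ 3"
proof -
  define g where "g = sqrt (a*d)"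
  have g: "g > 0" "g^2 = a*d" using pos unfolding g_def by auto
  note co = param_coeffs[OF pos g cond[folded g_def]]
  define K where "K = 2*a+b+c+2*d"
  have Kp: "K > 0" using pos unfolding K_def by simp
  define \<kappa> where "\<kappa> = min (min (min a b) (min c d)) (min (a*c) (b*d) / (4*K))"
  have kp: "\<kappa> > 0" using pos Kp unfolding \<kappa>_def by auto
  have k1: "\<kappa> \<le> min a b" "\<kappa> \<le> min c d" unfolding \<kappa>_def by auto
  have "\<kappa> \<le> min (a*c) (b*d) / (4*K)" unfolding \<kappa>_def by auto
  then have k2: "\<kappa> * (2*a+b+c+2*d) \<le> min (a*c) (b*d) / 4"
    using Kp unfolding K_def[symmetric] by (simp add: field_simps)
  show ?thesis
  proof (intro exI[of _ "\<kappa>/4"] conjI allI)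
    show "\<kappa>/4 > 0" using kp by simp
    fix u v :: "real^2"
    have sm: "(gf1 a b (v$1 + (u$1 - v$1)) (v$2 + (u$2 - v$2)) - gf1 a b (v$1) (v$2))*(u$1 - v$1)
      + (gf2 c d (v$1 + (u$1 - v$1)) (v$2 + (u$2 - v$2)) - gf2 c d (v$1) (v$2))*(u$2 - v$2)
      \<ge> \<kappa>/4 * sqrt((u$1 - v$1)^2+(u$2 - v$2)^2)^3"
      by (rule scalar_main[OF pos kp Q_bound[OF pos co(1) co(2) co(3) kp k1 k2]])
    have "norm (u - v) = sqrt((u$1 - v$1)^2+(u$2 - v$2)^2)" by (simp add: norm_vec_def L2_set_def sum_2)
    moreover have "(G_B a b c d u - G_B a b c d v) \<bullet> (u - v) =
      (gf1 a b (u$1) (u$2) - gf1 a b (v$1) (v$2))*(u$1 - v$1) + (gf2 c d (u$1) (u$2) - gf2 c d (v$1) (v$2))*(u$2 - v$2)"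
      by (simp add: inner_vec_def sum_2 GB_comp)
    ultimately show "(G_B a b c d u - G_B a b c d v) \<bullet> (u - v) \<ge> \<kappa>/4 * norm (u - v) ^ 3"
      using sm by simp
  qed
qed

lemma part2:
  fixes a b c d :: real
  assumes pos: "a > 0" "b > 0" "c > 0" "d > 0"
  shows "(max a d / min a d \<le> 16 \<longrightarrow>
        ((max a d / 2 - 2 * sqrt (a * d) \<le> b + c \<and> b + c \<le> 2 * sqrt (a * d))
           \<longleftrightarrow> b + c \<le> 2 * sqrt (a * d))
      \<and> ((max a d / 2 - 2 * sqrt (a * d) < b + c \<and> b + c < 2 * sqrt (a * d))
           \<longleftrightarrow> b + c < 2 * sqrt (a * d)))
   \<and> (max a d / min a d = 64 \<longrightarrow>
        ((max a d / 2 - 2 * sqrt (a * d) \<le> b + c \<and> b + c \<le> 2 * sqrt (a * d))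
           \<longleftrightarrow> b + c = 2 * sqrt (a * d))
      \<and> \<not> (max a d / 2 - 2 * sqrt (a * d) < b + c \<and> b + c < 2 * sqrt (a * d)))
   \<and> (max a d / min a d > 64 \<longrightarrow>
        \<not> (max a d / 2 - 2 * sqrt (a * d) \<le> b + c \<and> b + c \<le> 2 * sqrt (a * d)))"
proof -
  define M where "M = max a d"
  define m where "m = min a d"
  have Mm: "M*m = a*d" "m > 0" "M \<ge> m" unfolding M_def m_def using pos
    by (auto simp: max_def min_def)
  define g where "g = sqrt (a*d)"
  have g: "g \<ge> 0" "g^2 = M*m" using pos Mm unfolding g_def by auto
  have bc: "b + c > 0" using pos by simp
  have A: "M/2 - 2*g \<le> 0" if "M/m \<le> 16"
  proof -
    have "M \<le> 16*m" using that Mm by (simp add: field_simps)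
    then have "M*M \<le> M*(16*m)" using Mm by (intro mult_left_mono) auto
    then have M2: "M^2 \<le> (4*g)^2" using g by (simp add: power2_eq_square algebra_simps)
    have "M \<le> 4*g" by (rule power2_le_imp_le[OF M2]) (use g in simp)
    then show ?thesis by simp
  qed
  have B: "M/2 - 2*g = 2*g" if "M/m = 64"
  proof -
    have M64: "M = 64*m" using that Mm by (simp add: field_simps)
    then have g2: "g^2 = (8*m)^2" using g by (simp add: power2_eq_square)
    have "g = 8*m" by (rule power2_eq_imp_eq[OF g2]) (use g Mm in simp_all)
    then show ?thesis using M64 by simp
  qed
  have C: "M/2 - 2*g > 2*g" if "M/m > 64"
  proof -
    have "M > 64*m" using that Mm by (simp add: field_simps)
    then have "M*M > M*(64*m)" using Mm by (intro mult_strict_left_mono) auto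
    then have M2: "(8*g)^2 < M^2" using g by (simp add: power2_eq_square algebra_simps)
    have "8*g < M" by (rule power2_less_imp_less[OF M2]) (use Mm in simp)
    then show ?thesis by simp
  qed
  show ?thesis unfolding M_def[symmetric] m_def[symmetric] g_def[symmetric]
    using A B C bc by (intro conjI impI) auto
qed

theorem mainTheorem6:
  fixes a b c d :: real
  assumes "a > 0" "b > 0" "c > 0" "d > 0"
  shows
    "(max a d / 2 - 2 * sqrt (a * d) \<le> b + c \<and> b + c \<le> 2 * sqrt (a * d)
        \<longrightarrow> monotone_map (G_B a b c d))
   \<and> (max a d / 2 - 2 * sqrt (a * d) < b + c \<and> b + c < 2 * sqrt (a * d)
        \<longrightarrow> alpha_monotone 3 (G_B a b c d))
   \<and> (max a d / min a d \<le> 16 \<longrightarrow>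
        ((max a d / 2 - 2 * sqrt (a * d) \<le> b + c \<and> b + c \<le> 2 * sqrt (a * d))
           \<longleftrightarrow> b + c \<le> 2 * sqrt (a * d))
      \<and> ((max a d / 2 - 2 * sqrt (a * d) < b + c \<and> b + c < 2 * sqrt (a * d))
           \<longleftrightarrow> b + c < 2 * sqrt (a * d)))
   \<and> (max a d / min a d = 64 \<longrightarrow>
        ((max a d / 2 - 2 * sqrt (a * d) \<le> b + c \<and> b + c \<le> 2 * sqrt (a * d))
           \<longleftrightarrow> b + c = 2 * sqrt (a * d))
      \<and> \<not> (max a d / 2 - 2 * sqrt (a * d) < b + c \<and> b + c < 2 * sqrt (a * d)))
   \<and> (max a d / min a d > 64 \<longrightarrow>
        \<not> (max a d / 2 - 2 * sqrt (a * d) \<le> b + c \<and> b + c \<le> 2 * sqrt (a * d)))"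
proof -
  have P1: "monotone_map (G_B a b c d)" if h: "max a d / 2 - 2 * sqrt (a * d) \<le> b + c" "b + c \<le> 2 * sqrt (a * d)"
  proof -
    obtain C where C: "C > 0" "\<forall>u v. (G_B a b c d u - G_B a b c d v) \<bullet> (u - v) \<ge> C * norm (u - v) ^ 3"
      using GB_main[OF assms h] by blast
    show ?thesis unfolding monotone_map_def
    proof (intro allI)
      fix u v :: "real^2"
      have "0 \<le> C * norm (u - v) ^ 3" using C by simp
      then show "0 \<le> (G_B a b c d u - G_B a b c d v) \<bullet> (u - v)" using C(2) by (meson order.trans)
    qed
  qed
  have P2: "alpha_monotone 3 (G_B a b c d)" if h: "max a d / 2 - 2 * sqrt (a * d) \<le> b + c" "b + c \<le> 2 * sqrt (a * d)"
  proof -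
    obtain C where C: "C > 0" "\<forall>u v. (G_B a b c d u - G_B a b c d v) \<bullet> (u - v) \<ge> C * norm (u - v) ^ 3"
      using GB_main[OF assms h] by blast
    have "norm (u - v) powr 3 = norm (u - v) ^ 3" for u v :: "real^2"
      by (cases "u = v") (simp_all add: powr_numeral)
    then show ?thesis unfolding alpha_monotone_def using C by (intro exI[of _ C]) auto
  qed
  show ?thesis using P1 P2 part2[OF assms] by auto
qed

end
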